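(* Let $G(\mathcal V,\mathcal E)$ be a finite simple directed graph and $f\ge 0$ an integer. Suppose that for every partition $A,B,F$ of $\mathcal V$ with $A,B$ non-empty and $|F|\le f$, either $A \Rightarrow_{\mathcal V - F} B$ or $B \Rightarrow_{\mathcal V - F} A$. Then for every partition $L,C,R,F$ of $\mathcal V$ (with $C$ or $F$ possibly empty) such that $L,R$ are non-empty and $|F|\le f$, either $L\cup C\rightarrow R$ or $R\cup C\rightarrow L$.
   Context: For disjoint sets $X,Y\subseteq\mathcal V$ with $Y$ non-empty, $X\rightarrow Y$ means that $X$ contains at least $f+1$ distinct nodes $i$ such that $(i,j)\in\mathcal E$ for some $j\in Y$. An $(X,y)$-path is a directed path from some node of $X$ to the node $y\notin X$; it excludes $F$ if it contains no node of $F$; $(X,y)$-paths are disjoint if they pairwise share only $y$. For pairwise disjoint $X,Y,F$ with $|F|\le f$, $X \Rightarrow_{\mathcal V - F} Y$ means: $Y=\emptyset$, or every $y\in Y$ has at least $f+1$ pairwise disjoint $(X,y)$-paths excluding $F$. *)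

theory Defs
  imports Main
begin

definition simple_digraph :: "'a set \<Rightarrow> ('a \<times> 'a) set \<Rightarrow> bool" where
  "simple_digraph V E \<longleftrightarrow> finite V \<and> E \<subseteq> V \<times> V \<and> (\<forall>v. (v, v) \<notin> E)"

definition reach_arrow :: "('a \<times> 'a) set \<Rightarrow> nat \<Rightarrow> 'a set \<Rightarrow> 'a set \<Rightarrow> bool" where
  "reach_arrow E f X Y \<longleftrightarrow> card {i \<in> X. \<exists>j \<in> Y. (i, j) \<in> E} \<ge> f + 1"

definition dpath :: "('a \<times> 'a) set \<Rightarrow> 'a list \<Rightarrow> bool" where
  "dpath E p \<longleftrightarrow> p \<noteq> [] \<and> distinct p \<and> (\<forall>i. Suc i < length p \<longrightarrow> (p ! i, p ! Suc i) \<in> E)"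

definition Xy_path :: "('a \<times> 'a) set \<Rightarrow> 'a set \<Rightarrow> 'a \<Rightarrow> 'a list \<Rightarrow> bool" where
  "Xy_path E X y p \<longleftrightarrow> dpath E p \<and> hd p \<in> X \<and> last p = y"

definition reduced_arrow :: "('a \<times> 'a) set \<Rightarrow> nat \<Rightarrow> 'a set \<Rightarrow> 'a set \<Rightarrow> 'a set \<Rightarrow> bool" where
  "reduced_arrow E f F X Y \<longleftrightarrow> Y = {} \<or>
     (\<forall>y \<in> Y. \<exists>P. finite P \<and> card P \<ge> f + 1 \<and>
        (\<forall>p \<in> P. Xy_path E X y p \<and> set p \<inter> F = {}) \<and>
        (\<forall>p \<in> P. \<forall>q \<in> P. p \<noteq> q \<longrightarrow> set p \<inter> set q = {y}))"

end

theory Submission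
  imports Defs
begin

lemma cross_idx:
  "p \<noteq> [] \<Longrightarrow> (\<forall>i. Suc i < length p \<longrightarrow> (p ! i, p ! Suc i) \<in> E) \<Longrightarrow> hd p \<notin> T \<Longrightarrow> last p \<in> T
   \<Longrightarrow> \<exists>k. Suc k < length p \<and> p ! k \<notin> T \<and> p ! Suc k \<in> T"
proof (induction p)
  case Nil then show ?case by simp
next
  case (Cons a q)
  show ?case
  proof (cases "q = []")
    case True then show ?thesis using Cons.prems by simp
  next
    case False
    show ?thesis
    proof (cases "hd q \<in> T")
      case True
      then show ?thesis using False Cons.prems by (auto simp: hd_conv_nth intro!: exI[of _ 0])
    next
      case F2: False
      have "\<forall>i. Suc i < length q \<longrightarrow> (q ! i, q ! Suc i) \<in> E"
      proof (intro allI impI)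
        fix i assume "Suc i < length q"
        then show "(q ! i, q ! Suc i) \<in> E" using Cons.prems(2)[rule_format, of "Suc i"] by simp
      qed
      moreover have "last q \<in> T" using Cons.prems False by simp
      ultimately obtain k where "Suc k < length q" "q ! k \<notin> T" "q ! Suc k \<in> T"
        using Cons.IH False F2 by blast
      then show ?thesis by (intro exI[of _ "Suc k"]) simp
    qed
  qed
qed

lemma cross_node:
  assumes "Xy_path E X y p" "X \<inter> T = {}" "y \<in> T"
  shows "\<exists>i \<in> set p. i \<notin> T \<and> (\<exists>j\<in>T. (i, j) \<in> E)"
proof -
  from assms have "p \<noteq> []" "\<forall>i. Suc i < length p \<longrightarrow> (p ! i, p ! Suc i) \<in> E" "hd p \<notin> T" "last p \<in> T"
    by (auto simp: Xy_path_def dpath_def)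
  then obtain k where "Suc k < length p" "p ! k \<notin> T" "p ! Suc k \<in> T" using cross_idx by metis
  moreover have "(p ! k, p ! Suc k) \<in> E" using \<open>\<forall>i. _\<close> calculation by blast
  ultimately show ?thesis by (metis Suc_lessD nth_mem)
qed

lemma key:
  assumes "finite V" "E \<subseteq> V \<times> V" "reduced_arrow E f F X Y" "y \<in> Y" "y \<in> T" "X \<inter> T = {}"
  shows "f + 1 \<le> card {i \<in> V - F - T. \<exists>j\<in>T. (i, j) \<in> E}"
proof -
  obtain P where P: "finite P" "card P \<ge> f + 1" "\<forall>p \<in> P. Xy_path E X y p \<and> set p \<inter> F = {}"
    "\<forall>p \<in> P. \<forall>q \<in> P. p \<noteq> q \<longrightarrow> set p \<inter> set q = {y}"
  proof -
    have "Y \<noteq> {}" using assms(4) by blast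
    then have "\<forall>y \<in> Y. \<exists>P. finite P \<and> card P \<ge> f + 1 \<and>
        (\<forall>p \<in> P. Xy_path E X y p \<and> set p \<inter> F = {}) \<and>
        (\<forall>p \<in> P. \<forall>q \<in> P. p \<noteq> q \<longrightarrow> set p \<inter> set q = {y})"
      using assms(3) unfolding reduced_arrow_def by (simp only: simp_thms)
    then have "\<exists>P. finite P \<and> card P \<ge> f + 1 \<and>
        (\<forall>p \<in> P. Xy_path E X y p \<and> set p \<inter> F = {}) \<and>
        (\<forall>p \<in> P. \<forall>q \<in> P. p \<noteq> q \<longrightarrow> set p \<inter> set q = {y})"
      using assms(4) by (rule bspec)
    then show ?thesis by (elim exE conjE) (rule that)
  qed
  have "\<forall>p\<in>P. \<exists>i. i \<in> set p \<and> i \<notin> T \<and> (\<exists>j\<in>T. (i, j) \<in> E)"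
  proof
    fix p assume "p \<in> P"
    then have "Xy_path E X y p" using P(3) by blast
    from cross_node[OF this assms(6,5)] show "\<exists>i. i \<in> set p \<and> i \<notin> T \<and> (\<exists>j\<in>T. (i, j) \<in> E)" by blast
  qed
  then obtain g where g: "\<forall>p\<in>P. g p \<in> set p \<and> g p \<notin> T \<and> (\<exists>j\<in>T. (g p, j) \<in> E)"
    using bchoice[of P "\<lambda>p i. i \<in> set p \<and> i \<notin> T \<and> (\<exists>j\<in>T. (i, j) \<in> E)"] by blast
  let ?S = "{i \<in> V - F - T. \<exists>j\<in>T. (i, j) \<in> E}"
  have sub: "g ` P \<subseteq> ?S"
  proof
    fix x assume "x \<in> g ` P"
    then obtain p where p: "p \<in> P" "x = g p" by blast
    then have gp: "g p \<in> set p" "g p \<notin> T" "\<exists>j\<in>T. (g p, j) \<in> E" using g by auto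
    then obtain j where "(g p, j) \<in> E" by blast
    then have "g p \<in> V" using assms(2) by blast
    moreover have "g p \<notin> F" using gp(1) P(3) p(1) by blast
    ultimately show "x \<in> ?S" using gp p(2) by blast
  qed
  have inj: "inj_on g P"
  proof (rule inj_onI)
    fix p q assume "p \<in> P" "q \<in> P" "g p = g q"
    show "p = q"
    proof (rule ccontr)
      assume "p \<noteq> q"
      then have "set p \<inter> set q = {y}" using P(4) \<open>p \<in> P\<close> \<open>q \<in> P\<close> by simp
      moreover have "g p \<in> set p" "g q \<in> set q" using g \<open>p \<in> P\<close> \<open>q \<in> P\<close> by auto
      ultimately have "g p \<in> {y}" using \<open>g p = g q\<close> by (metis IntI)
      then show False using g \<open>p \<in> P\<close> assms(5) by auto
    qed
  qed
  have "finite ?S" by (rule finite_subset[OF _ assms(1)]) blast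
  then have "card (g ` P) \<le> card ?S" using sub card_mono by blast
  moreover have "card (g ` P) = card P" using inj by (rule card_image)
  ultimately show ?thesis using P(2) by linarith
qed

theorem lemma7:
  fixes V :: "'a set" and E :: "('a \<times> 'a) set" and f :: nat
  assumes "simple_digraph V E"
    and "\<And>A B F. A \<union> B \<union> F = V \<Longrightarrow> A \<inter> B = {} \<Longrightarrow> A \<inter> F = {} \<Longrightarrow> B \<inter> F = {} \<Longrightarrow>
           A \<noteq> {} \<Longrightarrow> B \<noteq> {} \<Longrightarrow> card F \<le> f \<Longrightarrow>
           reduced_arrow E f F A B \<or> reduced_arrow E f F B A"
  shows "\<And>L C R F. L \<union> C \<union> R \<union> F = V \<Longrightarrow>
           L \<inter> C = {} \<Longrightarrow> L \<inter> R = {} \<Longrightarrow> L \<inter> F = {} \<Longrightarrow>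
           C \<inter> R = {} \<Longrightarrow> C \<inter> F = {} \<Longrightarrow> R \<inter> F = {} \<Longrightarrow>
           L \<noteq> {} \<Longrightarrow> R \<noteq> {} \<Longrightarrow> card F \<le> f \<Longrightarrow>
           reach_arrow E f (L \<union> C) R \<or> reach_arrow E f (R \<union> C) L"
proof -
  fix L C R F
  assume h: "L \<union> C \<union> R \<union> F = V" "L \<inter> C = {}" "L \<inter> R = {}" "L \<inter> F = {}"
    "C \<inter> R = {}" "C \<inter> F = {}" "R \<inter> F = {}" "L \<noteq> {}" "R \<noteq> {}" "card F \<le> f"
  have fin: "finite V" and EV: "E \<subseteq> V \<times> V" using assms(1) by (auto simp: simple_digraph_def)
  have "reduced_arrow E f F L (C \<union> R) \<or> reduced_arrow E f F (C \<union> R) L"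
    by (rule assms(2)) (use h in blast)+
  then show "reach_arrow E f (L \<union> C) R \<or> reach_arrow E f (R \<union> C) L"
  proof
    assume a: "reduced_arrow E f F L (C \<union> R)"
    obtain y where "y \<in> R" using h by blast
    have "f + 1 \<le> card {i \<in> V - F - R. \<exists>j\<in>R. (i, j) \<in> E}"
      by (rule key[OF fin EV a, of y R]) (use \<open>y \<in> R\<close> h in auto)
    moreover have "V - F - R = L \<union> C" using h by blast
    ultimately show ?thesis unfolding reach_arrow_def by simp
  next
    assume a: "reduced_arrow E f F (C \<union> R) L"
    obtain y where "y \<in> L" using h by blast
    have "f + 1 \<le> card {i \<in> V - F - L. \<exists>j\<in>L. (i, j) \<in> E}"
      by (rule key[OF fin EV a, of y L]) (use \<open>y \<in> L\<close> h in auto)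
    moreover have "V - F - L = R \<union> C" using h by blast
    ultimately show ?thesis unfolding reach_arrow_def by simp
  qed
qed

end
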